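(* Let $A$ be a finite set with $q:=|A|\ge 2$ and $n\ge 2$. The alternating group $\mathrm{Alt}(A^n)$ is generated by the instructions that are even permutations of $A^n$, unless $q=2$ and $n\in\{2,3\}$.
   Context: Any $f\in\mathrm{Sym}(A^n)$ is written $f(x)=(f_1(x),\ldots,f_n(x))$ with coordinate functions $f_i:A^n\to A$; the $i$-th coordinate function is trivial if $f_i(x)=x_i$ for all $x$. An instruction is a permutation of $A^n$ with at most one nontrivial coordinate function (the identity counts as an instruction). (The paper phrases the conclusion as: $\mathrm{Alt}(A^n)$ is internally computable, meaning it is generated by $\mathrm{Alt}(A^n)\cap\mathcal{I}$, where $\mathcal{I}$ is the set of instructions.) *)

theory Defs
  imports "HOL-Algebra.Sym_Groups"
begin

definition cube :: "'a set \<Rightarrow> nat \<Rightarrow> (nat \<Rightarrow> 'a) set"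
  where "cube A n = ({..<n} \<rightarrow>\<^sub>E A)"

definition perm_group :: "'b set \<Rightarrow> ('b \<Rightarrow> 'b) monoid"
  where "perm_group X = \<lparr> carrier = {p. p permutes X}, mult = (\<circ>), one = id \<rparr>"

definition Alt :: "'b set \<Rightarrow> ('b \<Rightarrow> 'b) set"
  where "Alt X = {p. p permutes X \<and> evenperm p}"

definition instructions :: "'a set \<Rightarrow> nat \<Rightarrow> ((nat \<Rightarrow> 'a) \<Rightarrow> (nat \<Rightarrow> 'a)) set"
  where "instructions A n =
     {f. f permutes cube A n \<and>
         (\<exists>i. \<forall>j<n. j \<noteq> i \<longrightarrow> (\<forall>x\<in>cube A n. f x j = x j))}"

end

theory Submission
  imports Defs
begin


lemma perm_group_group: "group (perm_group X)"
  using permutes_inv permutes_inv_o(2)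
  by (auto intro!: groupI
         simp add: perm_group_def permutes_compose
                   permutes_id comp_assoc, blast)

lemma perm_group_inv: "p permutes X \<Longrightarrow> m_inv (perm_group X) p = inv' p"
  by (rule group.inv_equality[OF perm_group_group])
     (auto simp: perm_group_def permutes_inv permutes_inv_o)

lemma finite_cube: "finite A \<Longrightarrow> finite (cube A n)"
  unfolding cube_def by (simp add: finite_PiE)

lemma cube_upd: "x \<in> cube A n \<Longrightarrow> k < n \<Longrightarrow> v \<in> A \<Longrightarrow> x(k := v) \<in> cube A n"
  unfolding cube_def by (auto simp: PiE_iff extensional_def)

lemma Alt_subgroup:
  assumes "finite X"
  shows "subgroup (Alt X) (perm_group X)"
proof -
  have pm: "p permutes X \<Longrightarrow> permutation p" for p
    using assms permutation_permutes by blast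
  show ?thesis
  proof (rule group.subgroupI[OF perm_group_group])
    show "Alt X \<subseteq> carrier (perm_group X)"
      by (auto simp: Alt_def perm_group_def)
    show "Alt X \<noteq> {}"
      by (auto simp: Alt_def intro!: exI[of _ id])
    show "m_inv (perm_group X) a \<in> Alt X" if "a \<in> Alt X" for a
      using that by (auto simp: Alt_def perm_group_inv permutes_inv evenperm_inv pm)
    show "a \<otimes>\<^bsub>perm_group X\<^esub> b \<in> Alt X" if "a \<in> Alt X" "b \<in> Alt X" for a b
      using that by (auto simp: Alt_def perm_group_def permutes_compose evenperm_comp pm)
  qed
qed

locale cubeloc =
  fixes A :: "'a set" and n :: nat
  assumes finA: "finite A"
begin

abbreviation "X \<equiv> cube A n"
abbreviation "G \<equiv> perm_group X"
definition "H = generate G (Alt X \<inter> instructions A n)"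

lemma finX: "finite X" using finite_cube finA by blast

lemma pmX: "p permutes X \<Longrightarrow> permutation p"
  using finX permutation_permutes by blast

lemma H_sub: "subgroup H G"
  unfolding H_def
  by (rule group.generate_is_subgroup[OF perm_group_group])
     (auto simp: perm_group_def Alt_def)

lemma H_perm: "p \<in> H \<Longrightarrow> p permutes X"
  using subgroup.subset[OF H_sub] by (auto simp: perm_group_def)

lemma H_comp: "p \<in> H \<Longrightarrow> q \<in> H \<Longrightarrow> p \<circ> q \<in> H"
  using subgroup.m_closed[OF H_sub] by (auto simp: perm_group_def)

lemma H_id: "id \<in> H"
  using subgroup.one_closed[OF H_sub] by (auto simp: perm_group_def)

lemma H_inv: "p \<in> H \<Longrightarrow> inv' p \<in> H"
  using subgroup.m_inv_closed[OF H_sub] H_perm perm_group_inv by metis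

lemma H_instr:
  assumes "f permutes X" "evenperm f" "\<forall>x\<in>X. \<forall>j<n. j \<noteq> i \<longrightarrow> f x j = x j"
  shows "f \<in> H"
proof -
  have "f \<in> Alt X \<inter> instructions A n"
    using assms unfolding Alt_def instructions_def by blast
  then show ?thesis unfolding H_def by (rule generate.incl)
qed

definition adj :: "nat \<Rightarrow> (nat \<Rightarrow> 'a) \<Rightarrow> (nat \<Rightarrow> 'a) \<Rightarrow> bool" where
  "adj i a b \<longleftrightarrow> a \<in> X \<and> b \<in> X \<and> a \<noteq> b \<and> (\<forall>j<n. j \<noteq> i \<longrightarrow> a j = b j)"

lemma adj_transpose_coord:
  "adj i a b \<Longrightarrow> j < n \<Longrightarrow> j \<noteq> i \<Longrightarrow> transpose a b y j = y j"
  unfolding adj_def transpose_def by auto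

lemma same_dir:
  assumes "adj i a b" "adj i c d"
  shows "transpose a b \<circ> transpose c d \<in> H"
proof (rule H_instr[where i=i])
  show "transpose a b \<circ> transpose c d permutes X"
    using assms by (auto simp: adj_def intro!: permutes_compose permutes_swap_id)
  show "evenperm (transpose a b \<circ> transpose c d)"
    using assms by (simp add: evenperm_comp permutation_swap_id evenperm_swap adj_def)
  show "\<forall>x\<in>X. \<forall>j<n. j \<noteq> i \<longrightarrow> (transpose a b \<circ> transpose c d) x j = x j"
    using assms adj_transpose_coord by simp
qed

lemma conj_transpose:
  assumes "bij s"
  shows "s \<circ> transpose a b \<circ> inv' s = transpose (s a) (s b)"
proof (rule ext)
  fix x
  have "s (inv' s x) = x" using assms by (simp add: bij_is_surj surj_f_inv_f)
  moreover have "inv' s x = a \<longleftrightarrow> x = s a" "inv' s x = b \<longleftrightarrow> x = s b"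
    using assms by (metis bij_inv_eq_iff)+
  ultimately show "(s \<circ> transpose a b \<circ> inv' s) x = transpose (s a) (s b) x"
    by (auto simp: transpose_def)
qed

lemma conj:
  assumes "s \<in> H" "transpose a b \<circ> transpose c d \<in> H"
  shows "transpose (s a) (s b) \<circ> transpose (s c) (s d) \<in> H"
proof -
  have b: "bij s" using H_perm[OF assms(1)] permutes_bij by blast
  have "s \<circ> (transpose a b \<circ> transpose c d) \<circ> inv' s \<in> H"
    using assms H_comp H_inv by blast
  moreover have "s \<circ> (transpose a b \<circ> transpose c d) \<circ> inv' s
     = (s \<circ> transpose a b \<circ> inv' s) \<circ> (s \<circ> transpose c d \<circ> inv' s)"
    using b by (simp add: fun_eq_iff bij_is_inj)
  ultimately show ?thesis using conj_transpose[OF b] by simp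
qed

end


context cubeloc
begin

lemma X_diff:
  assumes "a \<in> X" "b \<in> X" "a \<noteq> b" shows "\<exists>k<n. a k \<noteq> b k"
proof (rule ccontr)
  assume "\<not> ?thesis"
  then have "\<forall>k. a k = b k" using assms(1,2) unfolding cube_def by (metis PiE_arb lessThan_iff)
  then show False using assms(3) by auto
qed

lemma adj_upd: "x \<in> X \<Longrightarrow> i < n \<Longrightarrow> v \<in> A \<Longrightarrow> x i \<noteq> v \<Longrightarrow> adj i x (x(i := v))"
  unfolding adj_def using cube_upd by (auto simp: fun_eq_iff)


lemma adj_diff: "adj i a b \<Longrightarrow> i < n \<and> a i \<noteq> b i"
  unfolding adj_def using X_diff by blast

lemma transp_swap_H:
  assumes "transpose a b \<circ> transpose c d \<in> H"
  shows "transpose c d \<circ> transpose a b \<in> H"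
proof -
  have "inv' (transpose a b \<circ> transpose c d) = transpose c d \<circ> transpose a b"
    by (rule inv_unique_comp) (simp_all add: fun_eq_iff)
  then show ?thesis using H_inv[OF assms] by simp
qed

lemma link:
  assumes "s \<in> H" "adj i x y" "adj j x z" "adj j u v" "i \<noteq> j"
    "s x = y" "s z = z" "s u = u" "s v = v"
  shows "transpose x y \<circ> transpose x z \<in> H"
proof -
  have 1: "transpose u v \<circ> transpose x z \<in> H" using assms same_dir by blast
  have 2: "transpose u v \<circ> transpose y z \<in> H" using conj[OF assms(1) 1] assms by simp
  have 3: "transpose x z \<circ> transpose u v \<in> H" using assms same_dir by blast
  have "(transpose x z \<circ> transpose u v) \<circ> (transpose u v \<circ> transpose y z)
        = transpose x z \<circ> transpose y z"
    by (simp add: fun_eq_iff)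
  then have 4: "transpose x z \<circ> transpose y z \<in> H" using H_comp[OF 3 2] by simp
  have d1: "x \<noteq> y" "x \<noteq> z" using assms(2,3) by (auto simp: adj_def)
  have "y i \<noteq> z i"
    using adj_diff[OF assms(2)] assms(3,5) unfolding adj_def by auto
  then have d2: "y \<noteq> z" by auto
  have "transpose x y \<circ> transpose x z = transpose x z \<circ> transpose y z"
  proof (rule ext)
    fix w show "(transpose x y \<circ> transpose x z) w = (transpose x z \<circ> transpose y z) w"
      using d1 d2 by (cases "w = x"; cases "w = y"; cases "w = z") simp_all
  qed
  then show ?thesis using 4 by simp
qed

lemma dist_ind:
  assumes adjH: "\<And>i a b. adj i a b \<Longrightarrow> transpose a b \<circ> transpose p q \<in> H"
  shows "a \<in> X \<Longrightarrow> b \<in> X \<Longrightarrow> a \<noteq> b \<Longrightarrow> transpose a b \<circ> transpose p q \<in> H"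
proof (induction "card {k. k < n \<and> a k \<noteq> b k}" arbitrary: a rule: less_induct)
  case less
  obtain k where k: "k < n" "a k \<noteq> b k" using X_diff less.prems by blast
  define z where "z = a(k := b k)"
  have zX: "z \<in> X" unfolding z_def
    by (rule cube_upd) (use less.prems k in \<open>auto simp: cube_def PiE_iff\<close>)
  have bk: "b k \<in> A" using less.prems(2) k unfolding cube_def by auto
  have az: "adj k a z" unfolding z_def by (rule adj_upd) (use less.prems k bk in auto)
  show ?case
  proof (cases "z = b")
    case True
    then show ?thesis using adjH az by blast
  next
    case False
    have sub: "{k'. k' < n \<and> z k' \<noteq> b k'} \<subset> {k. k < n \<and> a k \<noteq> b k}"
      using k unfolding z_def by auto
    have "card {k'. k' < n \<and> z k' \<noteq> b k'} < card {k. k < n \<and> a k \<noteq> b k}"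
      by (rule psubset_card_mono[OF _ sub]) auto
    then have IH: "transpose z b \<circ> transpose p q \<in> H"
      using less.hyps zX less.prems False by blast
    have h1: "transpose a z \<circ> transpose p q \<in> H" using adjH az by blast
    have h2: "transpose p q \<circ> transpose z b \<in> H" using transp_swap_H[OF IH] .
    have "a \<noteq> b" "z \<noteq> b" "a \<noteq> z" using less.prems False az by (auto simp: adj_def)
    then have "transpose a b = transpose a z \<circ> transpose z b \<circ> transpose a z"
      using transpose_comp_triple[of a b z] by simp
    then have "transpose a b \<circ> transpose p q =
       ((transpose a z \<circ> transpose p q) \<circ> (transpose p q \<circ> transpose z b)) \<circ>
        (transpose a z \<circ> transpose p q)"
      by (simp add: fun_eq_iff)
    then show ?thesis using h1 h2 H_comp by metis
  qed
qed

lemma all_even: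
  assumes allT: "\<And>a b. a \<in> X \<Longrightarrow> b \<in> X \<Longrightarrow> a \<noteq> b \<Longrightarrow> transpose a b \<circ> transpose p q \<in> H"
    and pq: "p \<noteq> q"
    and f: "f permutes X" "evenperm f"
  shows "f \<in> H"
proof -
  let ?t = "transpose p q"
  have "(evenperm f \<longrightarrow> f \<in> H) \<and> (\<not> evenperm f \<longrightarrow> ?t \<circ> f \<in> H)"
    using f(1) finX
  proof (induction rule: permutes_induct)
    case id
    then show ?case by (metis H_id evenperm_id)
  next
    case (swap a b g)
    have ev: "evenperm (transpose a b \<circ> g) = (\<not> evenperm g)"
      using swap pmX by (simp add: evenperm_comp permutation_swap_id evenperm_swap)
    have t1: "transpose a b \<circ> ?t \<in> H" using allT swap by blast
    have t2: "?t \<circ> transpose a b \<in> H" using transp_swap_H[OF t1] .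
    show ?case
    proof (cases "evenperm g")
      case True
      then have "g \<in> H" using swap by blast
      then have "(?t \<circ> transpose a b) \<circ> g \<in> H" using t2 H_comp by blast
      then have "?t \<circ> (transpose a b \<circ> g) \<in> H" by (simp only: comp_assoc)
      then show ?thesis using ev True unfolding comp_def by blast
    next
      case False
      then have "?t \<circ> g \<in> H" using swap by blast
      then have "(transpose a b \<circ> ?t) \<circ> (?t \<circ> g) \<in> H" using t1 H_comp by blast
      moreover have "(transpose a b \<circ> ?t) \<circ> (?t \<circ> g) = transpose a b \<circ> g"
        by (simp add: fun_eq_iff)
      ultimately have "transpose a b \<circ> g \<in> H" by simp
      then show ?thesis using ev False unfolding comp_def by blast
    qed
  qed
  then show ?thesis using f by blast
qed

end


context cubeloc
begin

lemma reduce: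
  assumes "adj i x y" "adj 0 x z" "transpose x y \<circ> transpose x z \<in> H" "adj 0 p q" "adj i a b"
  shows "transpose a b \<circ> transpose p q \<in> H"
proof -
  have 1: "transpose a b \<circ> transpose x y \<in> H" using same_dir assms by blast
  have 2: "transpose x z \<circ> transpose p q \<in> H" using same_dir assms by blast
  have "transpose a b \<circ> transpose p q =
     (transpose a b \<circ> transpose x y) \<circ> ((transpose x y \<circ> transpose x z) \<circ> (transpose x z \<circ> transpose p q))"
    by (simp add: fun_eq_iff)
  then show ?thesis using 1 2 assms(3) H_comp by metis
qed

lemma neq_at: "f c \<noteq> g c \<Longrightarrow> f \<noteq> g" by auto

lemma cross3:
  assumes x0: "x0 \<in> X" "\<And>c. c < n \<Longrightarrow> x0 c = a0"
    and a: "a0 \<in> A" "a1 \<in> A" "a2 \<in> A" "a0 \<noteq> a1" "a0 \<noteq> a2" "a1 \<noteq> a2"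
    and i: "0 < i" "i < n"
  shows "\<exists>x y z. adj i x y \<and> adj 0 x z \<and> transpose x y \<circ> transpose x z \<in> H"
proof -
  define y where "y = x0(i := a1)"
  define y' where "y' = x0(i := a2)"
  define z where "z = x0(0 := a1)"
  define v where "v = x0(0 := a2)"
  have ax: "adj i x0 y" "adj i x0 y'" "adj 0 x0 z" "adj 0 x0 v"
    using adj_upd x0 a i unfolding y_def y'_def z_def v_def by auto
  have zX: "z \<in> X" using ax(3) by (simp add: adj_def)
  have zv0: "z 0 \<noteq> a2" unfolding z_def using a(6) by simp
  have n0: "0 < n" using i by simp
  have "adj 0 z (z(0 := a2))" using adj_upd[OF zX n0 a(3) zv0] .
  moreover have "z(0 := a2) = v" by (simp add: z_def v_def)
  ultimately have zv: "adj 0 z v" by simp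
  define s where "s = transpose x0 y' \<circ> transpose x0 y"
  have sH: "s \<in> H" unfolding s_def using same_dir ax by blast
  have e: "y i = a1" "y' i = a2" "x0 i = a0" "z 0 = a1" "v 0 = a2" "x0 0 = a0"
    "y 0 = a0" "y' 0 = a0"
    using x0 i by (auto simp: y_def y'_def z_def v_def)
  have n1: "x0 \<noteq> y" "x0 \<noteq> y'" "y \<noteq> y'"
    using e a by auto
  have n2: "z \<noteq> x0" "z \<noteq> y" "z \<noteq> y'" "v \<noteq> x0" "v \<noteq> y" "v \<noteq> y'"
    using e a by auto
  have "s x0 = y" "s z = z" "s v = v"
    using n1 n2 by (auto simp: s_def transpose_def)
  then have "transpose x0 y \<circ> transpose x0 z \<in> H"
    using link[OF sH ax(1) ax(3) zv] i by simp
  then show ?thesis using ax by blast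
qed

lemma cross4:
  assumes x0: "x0 \<in> X" "\<And>c. c < n \<Longrightarrow> x0 c = a0"
    and a: "a0 \<in> A" "a1 \<in> A" "a0 \<noteq> a1"
    and i: "0 < i" "i < n" and kl: "k < n" "l < n" "k \<noteq> 0" "l \<noteq> 0" "k \<noteq> i" "l \<noteq> i" "k \<noteq> l"
  shows "\<exists>x y z. adj i x y \<and> adj 0 x z \<and> transpose x y \<circ> transpose x z \<in> H"
proof -
  define y where "y = x0(i := a1)"
  define z where "z = x0(0 := a1)"
  define p where "p = x0(k := a1)"
  define p' where "p' = p(i := a1)"
  define u where "u = x0(l := a1)"
  define v where "v = u(0 := a1)"
  have pX: "p \<in> X" "u \<in> X" unfolding p_def u_def using cube_upd x0 a kl by auto
  have ax: "adj i x0 y" "adj 0 x0 z" "adj i p p'" "adj 0 u v"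
    using adj_upd x0 a i kl pX unfolding y_def z_def p'_def v_def 
    by (auto simp: p_def u_def)
  define s where "s = transpose x0 y \<circ> transpose p p'"
  have sH: "s \<in> H" unfolding s_def using same_dir ax by blast
  have e: "y i = a1" "x0 i = a0" "p i = a0" "p' i = a1" "z i = a0" "u i = a0" "v i = a0"
    "y 0 = a0" "x0 0 = a0" "p 0 = a0" "p' 0 = a0" "z 0 = a1"
    "y k = a0" "x0 k = a0" "p k = a1" "p' k = a1" "z k = a0"
    "y l = a0" "x0 l = a0" "p l = a0" "p' l = a0" "z l = a0" "u l = a1" "v l = a1"
    using x0 i kl by (auto simp: y_def z_def p'_def p_def v_def u_def)
  have n: "x0 \<noteq> p" "x0 \<noteq> p'" "y \<noteq> p" "y \<noteq> p'" "z \<noteq> x0" "z \<noteq> y" "z \<noteq> p" "z \<noteq> p'"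
    "u \<noteq> x0" "u \<noteq> y" "u \<noteq> p" "u \<noteq> p'" "v \<noteq> x0" "v \<noteq> y" "v \<noteq> p" "v \<noteq> p'"
    using e a by auto
  have "s x0 = y" "s z = z" "s u = u" "s v = v"
    using n by (auto simp: s_def transpose_def)
  then have "transpose x0 y \<circ> transpose x0 z \<in> H"
    using link[OF sH ax(1) ax(2) ax(4)] i by simp
  then show ?thesis using ax by blast
qed

end


theorem proposition2:
  fixes A :: "'a set" and n :: nat
  assumes "finite A" and "card A \<ge> 2" and "n \<ge> 2"
    and "\<not> (card A = 2 \<and> n \<in> {2, 3})"
  shows "generate (perm_group (cube A n)) (Alt (cube A n) \<inter> instructions A n)
           = Alt (cube A n)"
proof -
  interpret cubeloc A n using assms(1) by unfold_locales
  obtain B where B: "B \<subseteq> A" "card B = 2" using obtain_subset_with_card_n assms(2) by metis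
  then obtain a0 a1 where a: "a0 \<in> A" "a1 \<in> A" "a0 \<noteq> a1"
    by (auto simp: card_2_iff)
  define x0 where "x0 = (\<lambda>c. if c < n then a0 else undefined)"
  have x0X: "x0 \<in> X" unfolding x0_def cube_def using a by (auto simp: PiE_iff extensional_def)
  have x0v: "\<And>c. c < n \<Longrightarrow> x0 c = a0" unfolding x0_def by simp
  have n0: "0 < n" using assms(3) by simp
  define p1 where "p1 = x0(0 := a1)"
  have ap: "adj 0 x0 p1" unfolding p1_def using adj_upd[OF x0X n0 a(2)] x0v n0 a by simp
  have cross: "\<exists>x y z. adj i x y \<and> adj 0 x z \<and> transpose x y \<circ> transpose x z \<in> H"
    if i: "0 < i" "i < n" for i
  proof (cases "card A \<ge> 3")
    case True
    have "card (A - {a0, a1}) = card A - 2"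
      using a assms(1) by (simp add: card_Diff_subset)
    then have "card (A - {a0, a1}) \<noteq> 0" using True by simp
    then have "A - {a0, a1} \<noteq> {}" by (metis card.empty)
    then obtain a2 where a2: "a2 \<in> A" "a0 \<noteq> a2" "a1 \<noteq> a2" by blast
    show ?thesis by (rule cross3[OF x0X x0v a(1) a(2) a2(1) a(3) a2(2) a2(3) i])
  next
    case False
    then have "card A = 2" using assms(2) by simp
    then have "n \<notin> {2, 3}" using assms(4) by blast
    then have n4: "n \<ge> 4" using assms(3) by auto
    define k where "k = (if i = 1 then 2 else (1::nat))"
    define l where "l = (if i = 3 then 2 else (3::nat))"
    show ?thesis
      by (rule cross4[OF x0X x0v a i, of k l]) (use n4 in \<open>auto simp: k_def l_def\<close>)
  qed
  have adjH: "transpose a b \<circ> transpose x0 p1 \<in> H" if ab: "adj i a b" for i a b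
  proof (cases "i = 0")
    case True
    then show ?thesis using same_dir ab ap by blast
  next
    case False
    then obtain x y z where "adj i x y" "adj 0 x z" "transpose x y \<circ> transpose x z \<in> H"
      using cross adj_diff[OF ab] by blast
    then show ?thesis using reduce ab ap by blast
  qed
  have allT: "transpose a b \<circ> transpose x0 p1 \<in> H" if "a \<in> X" "b \<in> X" "a \<noteq> b" for a b
    by (rule dist_ind[where p=x0 and q=p1]) (use adjH that in blast)+
  have x0p1: "x0 \<noteq> p1" using ap by (simp add: adj_def)
  have sub1: "Alt X \<subseteq> H"
    using all_even[OF allT x0p1] by (auto simp: Alt_def)
  have sub2: "H \<subseteq> Alt X"
    unfolding H_def
    by (rule group.generate_subgroup_incl[OF perm_group_group]) (auto intro: Alt_subgroup finX)
  show ?thesis using sub1 sub2 H_def by blast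
qed

end
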